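(* If $n\ge4$ and $h$ is odd with $h\ge\frac{3(n-1)}{n-3}$, then there exists $p\in\mathcal P$ such that $D_{\mu(p)}(p)=D_{\mu(p^r)}(p^r)=\{n\}$.
   Context: Let $n,h\ge2$ be integers, $N=\{1,\dots,n\}$, $H=\{1,\dots,h\}$. $\mathcal P$ is the set of $h$-tuples $p=(p_1,\dots,p_h)$ of linear orders on $N$; $p^r$ is obtained by reversing each $p_i$; $x>_{p_i}y$ means $x\ne y$ and $p_i$ ranks $x$ above $y$. For an integer $\mu$ with $h/2<\mu\le h$, $D_\mu(p)=\{x\in N: \forall y\in N,\ |\{i: y>_{p_i}x\}|<\mu\}$, and $\mu(p)=\min\{\mu\in\mathbb N\cap(h/2,h]: D_\mu(p)\neq\varnothing\}$. *)

theory Defs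
  imports Complex_Main
begin

text \<open>A linear order on N = {1..n} is a relation r with linear_order_on {1..n} r,
  where (a,b) in r means a is ranked at or below b. A profile is a function
  p :: nat => (nat*nat) set, only its values on H = {1..h} matter.\<close>

definition profiles :: "nat \<Rightarrow> nat \<Rightarrow> (nat \<Rightarrow> (nat \<times> nat) set) set" where
  "profiles n h = {p. \<forall>i\<in>{1..h}. linear_order_on {1..n} (p i)}"

definition rev_profile :: "(nat \<Rightarrow> (nat \<times> nat) set) \<Rightarrow> nat \<Rightarrow> (nat \<times> nat) set" where
  "rev_profile p = (\<lambda>i. converse (p i))"

definition ranked_above :: "(nat \<times> nat) set \<Rightarrow> nat \<Rightarrow> nat \<Rightarrow> bool" where
  "ranked_above r x y \<longleftrightarrow> x \<noteq> y \<and> (y, x) \<in> r"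

definition D :: "nat \<Rightarrow> nat \<Rightarrow> nat \<Rightarrow> (nat \<Rightarrow> (nat \<times> nat) set) \<Rightarrow> nat set" where
  "D n h \<mu> p = {x\<in>{1..n}. \<forall>y\<in>{1..n}. card {i\<in>{1..h}. ranked_above (p i) y x} < \<mu>}"

definition mu_of :: "nat \<Rightarrow> nat \<Rightarrow> (nat \<Rightarrow> (nat \<times> nat) set) \<Rightarrow> nat" where
  "mu_of n h p = (LEAST \<mu>. real h / 2 < real \<mu> \<and> \<mu> \<le> h \<and> D n h \<mu> p \<noteq> {})"

end

theory Submission
  imports Defs
begin

lemma linord_score:
  fixes f :: "nat \<Rightarrow> nat"
  assumes "inj_on f A"
  shows "linear_order_on A {(x,y). x\<in>A \<and> y\<in>A \<and> f x \<le> f y}"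
  using assms unfolding linear_order_on_def partial_order_on_def preorder_on_def refl_on_def
    trans_def antisym_def total_on_def inj_on_def
  by auto

lemma card_types:
  fixes \<tau> :: "'a \<Rightarrow> nat"
  assumes "\<forall>i\<in>A. \<tau> i < T" "finite A"
  shows "card {i\<in>A. P (\<tau> i)} = (\<Sum>t<T. if P t then card {i\<in>A. \<tau> i = t} else 0)"
proof -
  have "{i\<in>A. P (\<tau> i)} = (\<Union>t\<in>{t. t<T \<and> P t}. {i\<in>A. \<tau> i = t})" using assms(1) by auto
  moreover have "card (\<Union>t\<in>{t. t<T \<and> P t}. {i\<in>A. \<tau> i = t}) = (\<Sum>t\<in>{t. t<T \<and> P t}. card {i\<in>A. \<tau> i = t})"
    proof (intro card_UN_disjoint)
    show "finite {t. t<T \<and> P t}" by (rule finite_subset[of _ "{..<T}"]) auto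
  qed (use assms(2) in auto)
  ultimately have "card {i\<in>A. P (\<tau> i)} = (\<Sum>t\<in>{t. t<T \<and> P t}. card {i\<in>A. \<tau> i = t})" by simp
  also have "\<dots> = (\<Sum>t\<in>{t\<in>{..<T}. P t}. card {i\<in>A. \<tau> i = t})" by (rule sum.cong) auto
  also have "\<dots> = (\<Sum>t<T. if P t then card {i\<in>A. \<tau> i = t} else 0)"
    by (subst sum.inter_filter) auto
  finally show ?thesis .
qed

lemma D_mu_lemma:
  fixes C :: "nat \<Rightarrow> nat \<Rightarrow> nat"
  assumes C: "\<And>y x. C y x = card {i\<in>{1..h}. ranked_above (p i) y x}"
   and "1 \<le> n" "a+1 \<le> h" "real h / 2 < real (a+1)"
   and "\<forall>y\<in>{1..n}. C y n \<le> a" "\<exists>y\<in>{1..n}. a \<le> C y n"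
   and "\<forall>x\<in>{1..n}. x \<noteq> n \<longrightarrow> (\<exists>y\<in>{1..n}. a+1 \<le> C y x)"
  shows "D n h (mu_of n h p) p = {n}"
proof -
  have small: "D n h \<mu> p = {}" if "\<mu> \<le> a" for \<mu>
  proof -
    { fix x assume x: "x \<in> {1..n}" "\<forall>y\<in>{1..n}. C y x < \<mu>"
      have False
      proof (cases "x = n")
        case True then show ?thesis using assms(6) x that by force
      next
        case False then show ?thesis using assms(7) x that by force
      qed }
    then show ?thesis unfolding D_def C[symmetric] by auto
  qed
  have big: "D n h (a+1) p = {n}"
    unfolding D_def C[symmetric] using assms(2,5,7) by force
  have "mu_of n h p = a+1"
    unfolding mu_of_def
  proof (rule Least_equality)
    show "real h / 2 < real (a + 1) \<and> a + 1 \<le> h \<and> D n h (a + 1) p \<noteq> {}"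
      using assms big by auto
  next
    fix y assume "real h / 2 < real y \<and> y \<le> h \<and> D n h y p \<noteq> {}"
    then show "a+1 \<le> y" using small[of y] by (cases "y \<le> a") auto
  qed
  then show ?thesis using big by simp
qed

lemma aux1: "(A::nat) \<ge> 1 \<Longrightarrow> 1 \<le> x \<Longrightarrow> x < m \<Longrightarrow> (m*B - x < m*A) \<longleftrightarrow> B \<le> A"
proof
  assume h: "A \<ge> 1" "1 \<le> x" "x < m" "m*B - x < m*A"
  show "B \<le> A"
  proof (rule ccontr)
    assume "\<not> B \<le> A" hence "A + 1 \<le> B" by simp
    hence "m*(A+1) \<le> m*B" by (rule mult_le_mono2)
    thus False using h by (simp add: algebra_simps)
  qed
next
  assume h: "A \<ge> 1" "1 \<le> x" "x < m" "B \<le> A"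
  hence "m*B \<le> m*A" by simp
  moreover have "m*A \<ge> m" using h by simp
  ultimately show "m*B - x < m*A" using h by linarith
qed

lemma aux2: "(B::nat) \<ge> 1 \<Longrightarrow> 1 \<le> x \<Longrightarrow> x < m \<Longrightarrow> (m*A < m*B - x) \<longleftrightarrow> A < B"
proof
  assume h: "B \<ge> 1" "1 \<le> x" "x < m" "m*A < m*B - x"
  hence "m*A < m*B" by linarith
  thus "A < B" by simp
next
  assume h: "B \<ge> 1" "1 \<le> x" "x < m" "A < B"
  hence "A + 1 \<le> B" by simp
  hence "m*(A+1) \<le> m*B" by (rule mult_le_mono2)
  thus "m*A < m*B - x" using h by (simp add: algebra_simps)
qed


definition iota :: "nat \<Rightarrow> nat \<Rightarrow> nat \<Rightarrow> nat" where
  "iota n c z = (if z = n then 0 else if z \<le> c then z else 1)"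
definition sc :: "nat \<Rightarrow> nat \<Rightarrow> nat list \<Rightarrow> nat \<Rightarrow> nat" where
  "sc n c r z = (if z = n \<or> z \<le> c then (n+1) * (r ! iota n c z) else (n+1) * (r ! 1) - z)"
definition cnt :: "nat list list \<Rightarrow> nat list \<Rightarrow> nat \<Rightarrow> nat \<Rightarrow> nat" where
  "cnt tbl sz y x = sum_list (map (\<lambda>(r,s). if r!x < r!y then s else 0) (zip tbl sz))"
definition prof :: "nat \<Rightarrow> nat \<Rightarrow> nat list list \<Rightarrow> (nat \<Rightarrow> nat) \<Rightarrow> nat \<Rightarrow> (nat \<times> nat) set" where
  "prof n c tbl \<tau> = (\<lambda>i. {(x,y). x\<in>{1..n} \<and> y\<in>{1..n} \<and> sc n c (tbl!(\<tau> i)) x \<le> sc n c (tbl!(\<tau> i)) y})"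

definition good :: "nat \<Rightarrow> nat list \<Rightarrow> bool" where
  "good c r \<longleftrightarrow> distinct r \<and> length r = Suc c \<and> (\<forall>v\<in>set r. 1 \<le> v)"

lemma good_nth: "good c r \<Longrightarrow> j \<le> c \<Longrightarrow> 1 \<le> r ! j"
  unfolding good_def by (metis le_imp_less_Suc nth_mem)

lemma good_inj: "good c r \<Longrightarrow> j \<le> c \<Longrightarrow> j' \<le> c \<Longrightarrow> r!j = r!j' \<Longrightarrow> j = j'"
  unfolding good_def by (simp add: nth_eq_iff_index_eq)

lemma sc_less:
  assumes g: "good c r" and c: "1 \<le> c" "c < n" and zw: "z \<in> {1..n}" "w \<in> {1..n}"
    and e1: "\<not> ((z \<noteq> n \<and> c < z) \<and> (w \<noteq> n \<and> c < w))"
    and e2: "(z \<noteq> n \<and> c < z) \<longrightarrow> w \<noteq> 1" and e3: "(w \<noteq> n \<and> c < w) \<longrightarrow> z \<noteq> 1"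
  shows "sc n c r z < sc n c r w \<longleftrightarrow> r!(iota n c z) < r!(iota n c w)"
proof -
  have ic: "iota n c u \<le> c" for u unfolding iota_def using c by auto
  show ?thesis
  proof (cases "z = n \<or> z \<le> c")
    case zc: True
    show ?thesis
    proof (cases "w = n \<or> w \<le> c")
      case True
      have e: "sc n c r z = (n+1)*(r!iota n c z)" "sc n c r w = (n+1)*(r!iota n c w)"
        unfolding sc_def using zc True by auto
      show ?thesis unfolding e by (simp only: mult_less_cancel1) simp
    next
      case False
      hence iw: "iota n c w = 1" unfolding iota_def by auto
      have "z \<noteq> 1" using e3 False by auto
      hence ne: "iota n c z \<noteq> 1" using zc zw unfolding iota_def by auto
      have B: "1 \<le> r!1" using good_nth[OF g] c by auto
      have "sc n c r z < sc n c r w \<longleftrightarrow> r!(iota n c z) < r!1"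
        unfolding sc_def using zc False aux2[OF B, of w "n+1" "r!(iota n c z)"] zw by auto
      then show ?thesis using iw by simp
    qed
  next
    case zc: False
    hence wc: "w = n \<or> w \<le> c" using e1 by auto
    hence "w \<noteq> 1" using e2 zc by auto
    hence ne: "iota n c w \<noteq> 1" using wc zw unfolding iota_def by auto
    have iz: "iota n c z = 1" using zc unfolding iota_def by auto
    have A: "1 \<le> r!(iota n c w)" using good_nth[OF g ic] .
    have "sc n c r z < sc n c r w \<longleftrightarrow> r!1 \<le> r!(iota n c w)"
      unfolding sc_def using zc wc aux1[OF A, of z "n+1" "r!1"] zw by auto
    also have "\<dots> \<longleftrightarrow> r!1 < r!(iota n c w)"
    proof -
      have "r!1 \<noteq> r!(iota n c w)" using good_inj[OF g _ ic, of 1 w] ne c by auto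
      thus ?thesis by auto
    qed
    finally show ?thesis using iz by simp
  qed
qed

lemma sc_ext1:
  assumes g: "good c r" and c: "1 \<le> c" "c < n" and z: "z \<in> {1..n}" "z \<noteq> n" "c < z"
  shows "sc n c r z < sc n c r 1"
proof -
  have B: "1 \<le> r!1" using good_nth[OF g] c by auto
  have "iota n c 1 = 1" unfolding iota_def using c by auto
  thus ?thesis unfolding sc_def using z c B by (simp add: less_imp_diff_less)
qed

lemma sc_inj:
  assumes g: "good c r" and c: "1 \<le> c" "c < n"
  shows "inj_on (sc n c r) {1..n}"
proof (rule inj_onI)
  fix z w assume zw: "z \<in> {1..n}" "w \<in> {1..n}" and eq: "sc n c r z = sc n c r w"
  have ic: "iota n c u \<le> c" for u unfolding iota_def using c by auto
  show "z = w"
  proof (cases "(z \<noteq> n \<and> c < z) \<and> (w \<noteq> n \<and> c < w)")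
    case True
    have B: "1 \<le> r!1" using good_nth[OF g] c by auto
    have ge: "(n+1) * (r!1) \<ge> n+1" using mult_le_mono2[OF B, of "n+1"] by simp
    have "sc n c r z = (n+1) * (r!1) - z" "sc n c r w = (n+1) * (r!1) - w"
      unfolding sc_def using True by auto
    then have "(n+1) * (r!1) - z = (n+1) * (r!1) - w" using eq by simp
    then show ?thesis using ge zw by (simp only: atLeastAtMost_iff) linarith
  next
    case nb: False
    show ?thesis
    proof (cases "((z \<noteq> n \<and> c < z) \<and> w = 1) \<or> ((w \<noteq> n \<and> c < w) \<and> z = 1)")
      case True
      then show ?thesis
      proof
        assume a: "(z \<noteq> n \<and> c < z) \<and> w = 1"
        show ?thesis using sc_ext1[OF g c, of z] a zw eq by simp
      next
        assume a: "(w \<noteq> n \<and> c < w) \<and> z = 1"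
        show ?thesis using sc_ext1[OF g c, of w] a zw eq by simp
      qed
    next
      case False
      have "\<not> sc n c r z < sc n c r w" "\<not> sc n c r w < sc n c r z" using eq by auto
      moreover have "sc n c r z < sc n c r w \<longleftrightarrow> r!(iota n c z) < r!(iota n c w)"
        by (rule sc_less[OF g c zw]) (use nb False in auto)
      moreover have "sc n c r w < sc n c r z \<longleftrightarrow> r!(iota n c w) < r!(iota n c z)"
        by (rule sc_less[OF g c zw(2,1)]) (use nb False in auto)
      ultimately have "r!(iota n c z) = r!(iota n c w)" by linarith
      hence ii: "iota n c z = iota n c w" using good_inj[OF g ic ic] by blast
      have "z \<noteq> n \<and> c < z \<longrightarrow> w \<noteq> n \<and> c < w"
      proof
        assume a: "z \<noteq> n \<and> c < z"
        hence "iota n c z = 1" unfolding iota_def by auto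
        moreover have "w \<noteq> 1" using False a by auto
        ultimately have "iota n c w = 1" "w \<noteq> 1" using ii by auto
        then show "w \<noteq> n \<and> c < w" using c zw unfolding iota_def
          by (cases "w = n"; cases "w \<le> c") auto
      qed
      moreover have "w \<noteq> n \<and> c < w \<longrightarrow> z \<noteq> n \<and> c < z"
      proof
        assume a: "w \<noteq> n \<and> c < w"
        hence "iota n c w = 1" unfolding iota_def by auto
        moreover have "z \<noteq> 1" using False a by auto
        ultimately have "iota n c z = 1" "z \<noteq> 1" using ii by auto
        then show "z \<noteq> n \<and> c < z" using c zw unfolding iota_def
          by (cases "z = n"; cases "z \<le> c") auto
      qed
      ultimately have "\<not> (z \<noteq> n \<and> c < z)" "\<not> (w \<noteq> n \<and> c < w)" using nb by blast+
      then have "z = n \<or> z \<le> c" "w = n \<or> w \<le> c" by auto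
      then show ?thesis using ii c zw unfolding iota_def
        by (cases "z = n"; cases "w = n") auto
    qed
  qed
qed

lemma ranked_prof:
  assumes g: "good c (tbl!(\<tau> i))" and c: "1 \<le> c" "c < n" and zw: "z \<in> {1..n}" "w \<in> {1..n}"
  shows "ranked_above (prof n c tbl \<tau> i) w z \<longleftrightarrow> sc n c (tbl!(\<tau> i)) z < sc n c (tbl!(\<tau> i)) w"
proof -
  let ?f = "sc n c (tbl!(\<tau> i))"
  have "ranked_above (prof n c tbl \<tau> i) w z \<longleftrightarrow> w \<noteq> z \<and> ?f z \<le> ?f w"
    unfolding ranked_above_def prof_def using zw by simp
  also have "\<dots> \<longleftrightarrow> ?f z < ?f w"
    using inj_onD[OF sc_inj[OF g c] _ zw] zw by (metis le_neq_implies_less less_imp_le less_irrefl)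
  finally show ?thesis .
qed

lemma cnt_sum:
  assumes "length sz = length tbl"
  shows "cnt tbl sz y x = (\<Sum>t<length tbl. if tbl!t!x < tbl!t!y then sz!t else 0)"
  unfolding cnt_def sum_list_sum_nth using assms by (simp add: atLeast0LessThan)

lemma cnt_refl: "cnt tbl sz y y = 0"
  unfolding cnt_def by (induction tbl arbitrary: sz) (auto simp: zip_Cons1 split: list.splits)

lemma construction:
  fixes n h c a b :: nat and \<tau> :: "nat \<Rightarrow> nat" and tbl :: "nat list list" and sz :: "nat list"
  assumes c: "1 \<le> c" "c < n"
  and gd: "\<forall>r\<in>set tbl. good c r"
  and \<tau>: "\<forall>i\<in>{1..h}. \<tau> i < length tbl"
  and szl: "length sz = length tbl"
  and szc: "\<forall>t<length tbl. card {i\<in>{1..h}. \<tau> i = t} = sz!t"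
  and ab: "a+1 \<le> h" "real h / 2 < real (a+1)" "b+1 \<le> h" "real h / 2 < real (b+1)"
  and c1: "\<forall>y\<in>{1..c}. cnt tbl sz y 0 \<le> a" and c2: "\<exists>y\<in>{1..c}. a \<le> cnt tbl sz y 0"
  and c3: "\<forall>y\<in>{1..c}. cnt tbl sz 0 y \<le> b" and c4: "\<exists>y\<in>{1..c}. b \<le> cnt tbl sz 0 y"
  and c5: "\<forall>x\<in>{1..c}. \<exists>y\<le>c. a+1 \<le> cnt tbl sz y x"
  and c6: "\<forall>x\<in>{1..c}. \<exists>y\<le>c. b+1 \<le> cnt tbl sz x y"
  shows "\<exists>p\<in>profiles n h. D n h (mu_of n h p) p = {n} \<and>
           D n h (mu_of n h (rev_profile p)) (rev_profile p) = {n}"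
proof -
  define p where "p = prof n c tbl \<tau>"
  have gi: "good c (tbl!(\<tau> i))" if "i \<in> {1..h}" for i using gd \<tau> that by auto
  have prof: "p \<in> profiles n h"
    unfolding profiles_def p_def prof_def
    using linord_score[OF sc_inj[OF gi c]] by auto
  define C where "C w z = card {i\<in>{1..h}. ranked_above (p i) w z}" for w z
  have key: "C w z = cnt tbl sz (iota n c w) (iota n c z)"
    if zw: "z \<in> {1..n}" "w \<in> {1..n}"
    and e1: "\<not> ((z \<noteq> n \<and> c < z) \<and> (w \<noteq> n \<and> c < w))"
    and e2: "(z \<noteq> n \<and> c < z) \<longrightarrow> w \<noteq> 1" and e3: "(w \<noteq> n \<and> c < w) \<longrightarrow> z \<noteq> 1" for z w
  proof -
    let ?P = "\<lambda>t. tbl!t!(iota n c z) < tbl!t!(iota n c w)"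
    have "{i\<in>{1..h}. ranked_above (p i) w z} = {i\<in>{1..h}. ?P (\<tau> i)}"
    proof (rule Collect_cong)
      fix i show "(i \<in> {1..h} \<and> ranked_above (p i) w z) = (i \<in> {1..h} \<and> ?P (\<tau> i))"
      proof (cases "i \<in> {1..h}")
        case True
        show ?thesis using ranked_prof[where tbl=tbl and \<tau>=\<tau> and i=i, OF gi[OF True] c zw] sc_less[OF gi[OF True] c zw e1 e2 e3] True
          unfolding p_def by simp
      qed (simp only: simp_thms; blast)
    qed
    hence "C w z = (\<Sum>t<length tbl. if ?P t then card {i\<in>{1..h}. \<tau> i = t} else 0)"
      unfolding C_def using card_types[OF \<tau>, of ?P] by simp
    also have "\<dots> = (\<Sum>t<length tbl. if ?P t then sz!t else 0)"
      by (rule sum.cong) (use szc in auto)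
    also have "\<dots> = cnt tbl sz (iota n c w) (iota n c z)" using cnt_sum[OF szl] by simp
    finally show ?thesis .
  qed
  have ext1: "C 1 z = h" if z: "z \<in> {1..n}" "z \<noteq> n" "c < z" for z
  proof -
    have "{i\<in>{1..h}. ranked_above (p i) 1 z} = {1..h}"
      using ranked_prof[where tbl=tbl and \<tau>=\<tau> and w=1, OF gi c z(1)] sc_ext1[OF gi c z] c unfolding p_def by auto
    thus ?thesis unfolding C_def by simp
  qed
  have Cself: "C z z = 0" for z unfolding C_def ranked_above_def by simp
  have in_n: "n \<in> {1..n}" using c by auto
  have i_n: "iota n c n = 0" unfolding iota_def by simp
  have i_core: "iota n c y = y" if "y \<le> c" for y using that c unfolding iota_def by auto
  have i_ext: "iota n c y = 1" if "y \<noteq> n" "c < y" for y using that unfolding iota_def by auto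
  have i_range: "iota n c y \<in> {1..c}" if "y \<in> {1..n}" "y \<noteq> n" for y
    using that c unfolding iota_def by auto
  define el where "el y = (if y = 0 then n else y)" for y
  have el: "el y \<in> {1..n}" "iota n c (el y) = y" "\<not> (el y \<noteq> n \<and> c < el y)" if "y \<le> c" for y
    using that c unfolding el_def iota_def by auto
  have el1: "el y \<noteq> 1" if "y \<noteq> 1" "y \<le> c" for y using that c unfolding el_def by auto
  have f1: "\<forall>y\<in>{1..n}. C y n \<le> a"
  proof
    fix y assume y: "y \<in> {1..n}"
    show "C y n \<le> a"
    proof (cases "y = n")
      case True thus ?thesis using Cself by simp
    next
      case False
      have "C y n = cnt tbl sz (iota n c y) 0" using key[OF in_n y] c False i_n by auto
      thus ?thesis using c1 i_range[OF y False] by auto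
    qed
  qed
  have f2: "\<exists>y\<in>{1..n}. a \<le> C y n"
  proof -
    obtain y where y: "y \<in> {1..c}" "a \<le> cnt tbl sz y 0" using c2 by auto
    have "C y n = cnt tbl sz y 0" using key[OF in_n, of y] y c i_n i_core[of y] by auto
    thus ?thesis using y c by (intro bexI[of _ y]) auto
  qed
  have f3: "\<forall>x\<in>{1..n}. x \<noteq> n \<longrightarrow> (\<exists>y\<in>{1..n}. a+1 \<le> C y x)"
  proof (intro ballI impI)
    fix x assume x: "x \<in> {1..n}" "x \<noteq> n"
    show "\<exists>y\<in>{1..n}. a+1 \<le> C y x"
    proof (cases "x \<le> c")
      case True
      have "x \<in> {1..c}" using x True by auto
      then obtain y where y: "y \<le> c" "a+1 \<le> cnt tbl sz y x" using c5 by blast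
      have "C (el y) x = cnt tbl sz y x" using key[OF x(1) el(1)[OF y(1)]] el[OF y(1)] i_core[OF True] True
        by auto
      thus ?thesis using y el(1)[OF y(1)] by (intro bexI[of _ "el y"]) auto
    next
      case False
      thus ?thesis using ext1[OF x, of] ab c by (intro bexI[of _ 1]) auto
    qed
  qed
  define C' where "C' y x = C x y" for y x
  have C': "C' y x = card {i\<in>{1..h}. ranked_above (rev_profile p i) y x}" for y x
    unfolding C'_def C_def rev_profile_def ranked_above_def by (metis converse_iff)
  have r1: "\<forall>y\<in>{1..n}. C' y n \<le> b"
  proof
    fix y assume y: "y \<in> {1..n}"
    show "C' y n \<le> b"
    proof (cases "y = n")
      case True thus ?thesis using Cself C'_def by simp
    next
      case False
      have "C n y = cnt tbl sz 0 (iota n c y)" using key[OF y in_n] c False i_n by auto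
      thus ?thesis using c3 i_range[OF y False] C'_def by auto
    qed
  qed
  have r2: "\<exists>y\<in>{1..n}. b \<le> C' y n"
  proof -
    obtain y where y: "y \<in> {1..c}" "b \<le> cnt tbl sz 0 y" using c4 by auto
    have "C n y = cnt tbl sz 0 y" using key[OF _ in_n, of y] y c i_n i_core[of y] by auto
    thus ?thesis using y c C'_def by (intro bexI[of _ y]) auto
  qed
  have r3: "\<forall>x\<in>{1..n}. x \<noteq> n \<longrightarrow> (\<exists>y\<in>{1..n}. b+1 \<le> C' y x)"
  proof (intro ballI impI)
    fix x assume x: "x \<in> {1..n}" "x \<noteq> n"
    show "\<exists>y\<in>{1..n}. b+1 \<le> C' y x"
    proof (cases "x \<le> c")
      case True
      have "x \<in> {1..c}" using x True by auto
      then obtain y where y: "y \<le> c" "b+1 \<le> cnt tbl sz x y" using c6 by blast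
      have "C x (el y) = cnt tbl sz x y" using key[OF el(1)[OF y(1)] x(1)] el[OF y(1)] i_core[OF True] True
        by auto
      thus ?thesis using y el(1)[OF y(1)] C'_def by (intro bexI[of _ "el y"]) auto
    next
      case False
      have "1 \<in> {1..c}" using c by auto
      then obtain y where y: "y \<le> c" "b+1 \<le> cnt tbl sz 1 y" using c6 by blast
      have "y \<noteq> 1" using y cnt_refl[of tbl sz 1] by auto
      have "C x (el y) = cnt tbl sz 1 y"
        using key[OF el(1)[OF y(1)] x(1)] el[OF y(1)] el1[OF \<open>y \<noteq> 1\<close> y(1)] i_ext[OF x(2)] False
        by auto
      thus ?thesis using y el(1)[OF y(1)] C'_def by (intro bexI[of _ "el y"]) auto
    qed
  qed
  have "D n h (mu_of n h p) p = {n}"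
    by (rule D_mu_lemma[of C h p n a]) (use C_def f1 f2 f3 ab c in auto)
  moreover have "D n h (mu_of n h (rev_profile p)) (rev_profile p) = {n}"
    by (rule D_mu_lemma[of C' h "rev_profile p" n b]) (use C' r1 r2 r3 ab c in auto)
  ultimately show ?thesis using prof by blast
qed


lemma s15: "{1..5::nat} = {1,2,3,4,5}" by auto
lemma ex5: "(\<exists>y\<le>(5::nat). P y) \<longleftrightarrow> P 0 \<or> P 1 \<or> P 2 \<or> P 3 \<or> P 4 \<or> P 5"
  by (auto simp: le_Suc_eq numeral_eq_Suc)

lemma inst5:
  assumes n: "6 \<le> n"
  shows "\<exists>p\<in>profiles n 5. D n 5 (mu_of n 5 p) p = {n} \<and>
           D n 5 (mu_of n 5 (rev_profile p)) (rev_profile p) = {n}"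
proof (rule construction[where c=5 and \<tau>="\<lambda>i. i - 1" and a=3 and b=2
   and tbl="[[3,6,5,4,2,1],[3,1,6,5,4,2],[3,2,1,6,5,4],[3,4,2,1,6,5],[3,5,4,2,1,6]]"
   and sz="[1,1,1,1,1]"])
  show "\<forall>t<length [[3,6,5,4,2,1],[3,1,6,5,4,2],[3,2,1,6,5,4],[3,4,2,1,6,5],[3,5,4,2,1,6::nat]].
         card {i\<in>{1..5}. i - 1 = t} = [1,1,1,1,1::nat]!t"
  proof (intro allI impI)
    fix t assume "t < length [[3,6,5,4,2,1],[3,1,6,5,4,2],[3,2,1,6,5,4],[3,4,2,1,6,5],[3,5,4,2,1,6::nat]]"
    hence t: "t < 5" by simp
    hence "{i\<in>{1..5}. i - 1 = t} = {t+1}" by auto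
    moreover have "[1,1,1,1,1::nat]!t = 1" using t by (auto simp: less_Suc_eq numeral_eq_Suc)
    ultimately show "card {i\<in>{1..5::nat}. i - 1 = t} = [1,1,1,1,1::nat]!t" by simp
  qed
qed (use n in \<open>(unfold s15 ex5)?; simp add: good_def cnt_def\<close>)+


lemma s14: "{1..4::nat} = {1,2,3,4}" by auto
lemma ex4: "(\<exists>y\<le>(4::nat). P y) \<longleftrightarrow> P 0 \<or> P 1 \<or> P 2 \<or> P 3 \<or> P 4"
  by (auto simp: le_Suc_eq numeral_eq_Suc)
lemma s13: "{1..3::nat} = {1,2,3}" by auto
lemma ex3: "(\<exists>y\<le>(3::nat). P y) \<longleftrightarrow> P 0 \<or> P 1 \<or> P 2 \<or> P 3"
  by (auto simp: le_Suc_eq numeral_eq_Suc)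

lemma inst7:
  assumes n: "5 \<le> n"
  shows "\<exists>p\<in>profiles n 7. D n 7 (mu_of n 7 p) p = {n} \<and>
           D n 7 (mu_of n 7 (rev_profile p)) (rev_profile p) = {n}"
  apply (rule construction[where c=4 and \<tau>="\<lambda>i. i - 1" and a=4 and b=3
   and tbl="[[3,5,4,2,1],[3,5,4,2,1],[3,1,5,4,2],[2,1,5,4,3],[3,2,1,5,4],[2,3,1,5,4],[3,4,2,1,5]]"
   and sz="[1,1,1,1,1,1,1]"])
  subgoal using n by ((unfold s14 ex4)?; simp add: good_def cnt_def)
  subgoal using n by ((unfold s14 ex4)?; simp add: good_def cnt_def)
  subgoal using n by ((unfold s14 ex4)?; simp add: good_def cnt_def)
  subgoal by auto
  subgoal using n by ((unfold s14 ex4)?; simp add: good_def cnt_def)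
  subgoal
  proof (intro allI impI)
    fix t assume "t < length [[3,5,4,2,1],[3,5,4,2,1],[3,1,5,4,2],[2,1,5,4,3],[3,2,1,5,4],[2,3,1,5,4],[3,4,2,1,5::nat]]"
    hence t: "t < 7" by simp
    hence "{i\<in>{1..7}. i - 1 = t} = {t+1}" by auto
    moreover have "[1,1,1,1,1,1,1::nat]!t = 1" using t by (auto simp: less_Suc_eq numeral_eq_Suc)
    ultimately show "card {i\<in>{1..7::nat}. i - 1 = t} = [1,1,1,1,1,1,1::nat]!t" by simp
  qed
  subgoal using n by ((unfold s14 ex4)?; simp add: good_def cnt_def)
  subgoal using n by ((unfold s14 ex4)?; simp add: good_def cnt_def)
  subgoal using n by ((unfold s14 ex4)?; simp add: good_def cnt_def)
  subgoal using n by ((unfold s14 ex4)?; simp add: good_def cnt_def)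
  subgoal using n by ((unfold s14 ex4)?; simp add: good_def cnt_def)
  subgoal using n by ((unfold s14 ex4)?; simp add: good_def cnt_def)
  subgoal using n by ((unfold s14 ex4)?; simp add: good_def cnt_def)
  subgoal using n by ((unfold s14 ex4)?; simp add: good_def cnt_def)
  subgoal using n by ((unfold s14 ex4)?; simp add: good_def cnt_def)
  subgoal using n by ((unfold s14 ex4)?; simp add: good_def cnt_def)
  done

definition tau9 :: "nat \<Rightarrow> nat \<Rightarrow> nat" where
  "tau9 k i = (if i \<le> k-3 then 0 else if i \<le> k-1 then 1 else if i = k then 2
     else if i \<le> 2*k-2 then 3 else if i = 2*k-1 then 4 else 5)"

lemma tau9_card:
  assumes k: "4 \<le> k" and t: "t < 6"
  shows "card {i\<in>{1..2*k+1}. tau9 k i = t} = [k-3,2,1,k-2,1,2::nat]!t"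
proof -
  have "t = 0 \<or> t = 1 \<or> t = 2 \<or> t = 3 \<or> t = 4 \<or> t = 5" using t by auto
  moreover have "{i\<in>{1..2*k+1}. tau9 k i = 0} = {1..k-3}" using k unfolding tau9_def by auto
  moreover have "{i\<in>{1..2*k+1}. tau9 k i = 1} = {k-2..k-1}" using k unfolding tau9_def by auto
  moreover have "{i\<in>{1..2*k+1}. tau9 k i = 2} = {k}" using k unfolding tau9_def by auto
  moreover have "{i\<in>{1..2*k+1}. tau9 k i = 3} = {k+1..2*k-2}" using k unfolding tau9_def by auto
  moreover have "{i\<in>{1..2*k+1}. tau9 k i = 4} = {2*k-1}" using k unfolding tau9_def by auto
  moreover have "{i\<in>{1..2*k+1}. tau9 k i = 5} = {2*k..2*k+1}" using k unfolding tau9_def by auto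
  ultimately show ?thesis using k by auto
qed

lemma inst9:
  assumes n: "4 \<le> n" and k: "4 \<le> k"
  shows "\<exists>p\<in>profiles n (2*k+1). D n (2*k+1) (mu_of n (2*k+1) p) p = {n} \<and>
           D n (2*k+1) (mu_of n (2*k+1) (rev_profile p)) (rev_profile p) = {n}"
  apply (rule construction[where c=3 and \<tau>="tau9 k" and a="k+1" and b=k
   and tbl="[[3,2,4,1],[2,3,4,1],[3,4,1,2],[2,4,1,3],[3,1,2,4],[2,1,3,4]]"
   and sz="[k-3,2,1,k-2,1,2]"])
  subgoal using n k by ((unfold s13 ex3)?; simp add: good_def cnt_def; arith?)
  subgoal using n k by ((unfold s13 ex3)?; simp add: good_def cnt_def; arith?)
  subgoal using n k by ((unfold s13 ex3)?; simp add: good_def cnt_def; arith?)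
  subgoal unfolding tau9_def by simp
  subgoal using n k by ((unfold s13 ex3)?; simp add: good_def cnt_def; arith?)
  subgoal using tau9_card[OF k] by simp
  subgoal using n k by ((unfold s13 ex3)?; simp add: good_def cnt_def; arith?)
  subgoal using n k by ((unfold s13 ex3)?; simp add: good_def cnt_def; arith?)
  subgoal using n k by ((unfold s13 ex3)?; simp add: good_def cnt_def; arith?)
  subgoal using n k by ((unfold s13 ex3)?; simp add: good_def cnt_def; arith?)
  subgoal using n k by ((unfold s13 ex3)?; simp add: good_def cnt_def; arith?)
  subgoal using n k by ((unfold s13 ex3)?; simp add: good_def cnt_def; arith?)
  subgoal using n k by ((unfold s13 ex3)?; simp add: good_def cnt_def; arith?)
  subgoal using n k by ((unfold s13 ex3)?; simp add: good_def cnt_def; arith?)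
  subgoal using n k by ((unfold s13 ex3)?; simp add: good_def cnt_def; arith?)
  subgoal using n k by ((unfold s13 ex3)?; simp add: good_def cnt_def; arith?)
  done

theorem proposition8:
  fixes n h :: nat
  assumes "n \<ge> 4" and "odd h" and "real h \<ge> 3 * (real n - 1) / (real n - 3)"
  shows "\<exists>p\<in>profiles n h.
           D n h (mu_of n h p) p = {n} \<and>
           D n h (mu_of n h (rev_profile p)) (rev_profile p) = {n}"
proof -
  have pos: "real n - 3 > 0" using assms(1) by simp
  have R: "3 * (real n - 1) \<le> real h * (real n - 3)"
    using assms(3) pos by (simp add: pos_divide_le_eq)
  have h3: "\<not> h \<le> 3"
  proof
    assume "h \<le> 3"
    hence "real h * (real n - 3) \<le> 3 * (real n - 3)"
      using pos by (intro mult_right_mono) auto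
    hence "3 * (real n - 1) \<le> 3 * (real n - 3)" using R by (rule order.trans[rotated])
    thus False by simp
  qed
  show ?thesis
  proof (cases "h = 5")
    case True
    have "6 \<le> n" using R True by simp
    thus ?thesis using inst5 True by simp
  next
    case F5: False
    show ?thesis
    proof (cases "h = 7")
      case True
      have "5 \<le> n" using R True by simp
      thus ?thesis using inst7 True by simp
    next
      case F7: False
      obtain k where hk: "h = 2*k+1" using assms(2) oddE by blast
      have "4 \<le> k" using h3 F5 F7 hk by auto
      thus ?thesis using inst9[OF assms(1)] hk by simp
    qed
  qed
qed

end
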